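(* Assume $V=L$. Let $\zeta\in\Xi$, $X\in\mathrm{IPS}_\zeta$, and let $i\neq j$ be elements of $\zeta$. Then there is $Z\in\mathrm{IPS}_\zeta$ with $Z\subseteq X$, $Z$ clopen in $X$, such that $\{z(i):z\in Z\}\cap\{z(j):z\in Z\}=\varnothing$.
   Context: $T$ is the set of all nonempty finite sequences of countable ordinals, ordered by strict extension $\subset$. $\Xi$ is the set of all at most countable $\xi\subseteq T$ closed downward under $\subset$. $D=2^\omega$; $D^\xi$ is the product of $\xi$ copies of $D$ with the product topology; for $\eta\subseteq\xi$ and $x\in D^\xi$, $x\restriction\eta$ is the restriction. For $\zeta\in\Xi$, $\mathrm{IPS}_\zeta$ is the set of all $X\subseteq D^\zeta$ for which there is a homeomorphism $H$ of $D^\zeta$ onto $X$ such that for all $x_0,x_1\in D^\zeta$ and all $\xi\in\Xi$, $\xi\subseteq\zeta$: $x_0\restriction\xi=x_1\restriction\xi\iff H(x_0)\restriction\xi=H(x_1)\restriction\xi$. *)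

theory Defs
  imports "HOL-Analysis.Analysis" "HOL-Library.Sublist"
begin

text \<open>Nodes of the tree T: nonempty finite sequences of labels (type 'a stands for
  the countable ordinals), ordered by strict extension (strict prefix).\<close>
definition T_set :: "'a list set" where
  "T_set = {s. s \<noteq> []}"

definition Xi :: "'a list set set" where
  "Xi = {xi. xi \<subseteq> T_set \<and> countable xi \<and>
            (\<forall>t\<in>xi. \<forall>s\<in>T_set. strict_prefix s t \<longrightarrow> s \<in> xi)}"

definition D_top :: "(nat \<Rightarrow> bool) topology" where
  "D_top = product_topology (\<lambda>_. discrete_topology UNIV) UNIV"

definition Dpow :: "'a list set \<Rightarrow> ('a list \<Rightarrow> nat \<Rightarrow> bool) topology" where
  "Dpow zeta = product_topology (\<lambda>_. D_top) zeta"

definition IPS :: "'a list set \<Rightarrow> ('a list \<Rightarrow> nat \<Rightarrow> bool) set set" where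
  "IPS zeta = {X. X \<subseteq> topspace (Dpow zeta) \<and>
     (\<exists>H. homeomorphic_map (Dpow zeta) (subtopology (Dpow zeta) X) H \<and>
       (\<forall>x0\<in>topspace (Dpow zeta). \<forall>x1\<in>topspace (Dpow zeta).
          \<forall>xi\<in>Xi. xi \<subseteq> zeta \<longrightarrow>
            (restrict x0 xi = restrict x1 xi \<longleftrightarrow> restrict (H x0) xi = restrict (H x1) xi)))}"

end

theory Submission
  imports Defs
begin


lemma topspace_D [simp]: "topspace D_top = UNIV"
  by (simp add: D_top_def)

lemma topspace_Dpow: "topspace (Dpow zeta) = extensional zeta"
  by (auto simp: Dpow_def PiE_def)

lemma proj_cont:
  assumes "k \<in> zeta"
  shows "continuous_map (Dpow zeta) (discrete_topology UNIV) (\<lambda>x. x k m)"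
proof -
  have 1: "continuous_map (Dpow zeta) D_top (\<lambda>x. x k)"
    unfolding Dpow_def using assms by (rule continuous_map_product_projection)
  have 2: "continuous_map D_top (discrete_topology UNIV) (\<lambda>y. y m)"
    unfolding D_top_def by (rule continuous_map_product_projection) simp
  show ?thesis using continuous_map_compose[OF 1 2] by (simp add: o_def)
qed

lemma cylP_clopen:
  assumes "finite P" "fst ` P \<subseteq> zeta"
  shows "openin (Dpow zeta) {x\<in>topspace (Dpow zeta). \<forall>(k,m)\<in>P. x k m = x0 k m}
       \<and> closedin (Dpow zeta) {x\<in>topspace (Dpow zeta). \<forall>(k,m)\<in>P. x k m = x0 k m}"
  using assms
proof (induction P rule: finite_induct)
  case empty
  then show ?case by simp
next
  case (insert p P)
  obtain k m where p: "p = (k,m)" by fastforce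
  have k: "k \<in> zeta" using insert p by auto
  have eq: "{x\<in>topspace (Dpow zeta). \<forall>(k,m)\<in>insert p P. x k m = x0 k m}
     = {x\<in>topspace (Dpow zeta). \<forall>(k,m)\<in>P. x k m = x0 k m} \<inter>
       {x\<in>topspace (Dpow zeta). x k m \<in> {x0 k m}}" using p by auto
  have o: "openin (Dpow zeta) {x\<in>topspace (Dpow zeta). x k m \<in> {x0 k m}}"
    by (rule openin_continuous_map_preimage[OF proj_cont[OF k]]) simp
  have c: "closedin (Dpow zeta) {x\<in>topspace (Dpow zeta). x k m \<in> {x0 k m}}"
    by (rule closedin_continuous_map_preimage[OF proj_cont[OF k]]) simp
  show ?case unfolding eq using insert o c by auto
qed

definition cyl :: "'a list set \<Rightarrow> 'a list set \<Rightarrow> nat \<Rightarrow> ('a list \<Rightarrow> nat \<Rightarrow> bool) \<Rightarrow> ('a list \<Rightarrow> nat \<Rightarrow> bool) set"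
  where "cyl zeta F N x0 = {x\<in>topspace (Dpow zeta). \<forall>k\<in>F. \<forall>m<N. x k m = x0 k m}"

lemma cyl_clopen:
  assumes "finite F" "F \<subseteq> zeta"
  shows "openin (Dpow zeta) (cyl zeta F N x0) \<and> closedin (Dpow zeta) (cyl zeta F N x0)"
proof -
  have "cyl zeta F N x0 = {x\<in>topspace (Dpow zeta). \<forall>(k,m)\<in>F \<times> {..<N}. x k m = x0 k m}"
    unfolding cyl_def by auto
  then show ?thesis using cylP_clopen[of "F \<times> {..<N}" zeta x0] assms by auto
qed

lemma D_nbhd:
  assumes "openin D_top V" "y0 \<in> V"
  shows "\<exists>M. \<forall>y. (\<forall>m<M. y m = y0 m) \<longrightarrow> y \<in> V"
proof -
  obtain U where U: "finite {i. U i \<noteq> UNIV}" "y0 \<in> Pi\<^sub>E UNIV U" "Pi\<^sub>E UNIV U \<subseteq> V"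
    using assms unfolding D_top_def openin_product_topology_alt by auto
  obtain M where M: "{i. U i \<noteq> UNIV} \<subseteq> {..<M}" using finite_nat_bounded[OF U(1)] by blast
  have "y \<in> V" if "\<forall>m<M. y m = y0 m" for y
  proof -
    have "y \<in> Pi\<^sub>E UNIV U"
    proof (simp add: PiE_iff, intro allI)
      fix m show "y m \<in> U m"
      proof (cases "m < M")
        case True then show ?thesis using that U(2) by (auto simp: PiE_iff)
      next
        case False then show ?thesis using M by auto
      qed
    qed
    then show ?thesis using U(3) by blast
  qed
  then show ?thesis by blast
qed

lemma Dpow_nbhd:
  assumes "openin (Dpow zeta) W" "x0 \<in> W"
  shows "\<exists>F N. finite F \<and> F \<subseteq> zeta \<and> cyl zeta F N x0 \<subseteq> W"
proof -
  have "\<forall>x\<in>W. \<exists>U. finite {i \<in> zeta. U i \<noteq> topspace D_top} \<and> (\<forall>i\<in>zeta. openin D_top (U i)) \<and>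
    x \<in> Pi\<^sub>E zeta U \<and> Pi\<^sub>E zeta U \<subseteq> W"
    using assms(1) unfolding Dpow_def openin_product_topology_alt .
  then have "\<exists>U. finite {i \<in> zeta. U i \<noteq> topspace D_top} \<and> (\<forall>i\<in>zeta. openin D_top (U i)) \<and>
    x0 \<in> Pi\<^sub>E zeta U \<and> Pi\<^sub>E zeta U \<subseteq> W"
    using assms(2) by (rule bspec)
  then obtain U where U: "finite {i \<in> zeta. U i \<noteq> topspace D_top}" "\<forall>i\<in>zeta. openin D_top (U i)"
    "x0 \<in> Pi\<^sub>E zeta U" "Pi\<^sub>E zeta U \<subseteq> W"
    by blast
  define F where "F = {i \<in> zeta. U i \<noteq> UNIV}"
  have fin: "finite F" using U(1) by (simp add: F_def)
  have FZ: "F \<subseteq> zeta" by (simp add: F_def)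
  have ex: "\<forall>k\<in>F. \<exists>M. \<forall>y. (\<forall>m<M. y m = x0 k m) \<longrightarrow> y \<in> U k"
  proof
    fix k assume "k \<in> F"
    then have k: "k \<in> zeta" by (simp add: F_def)
    have "openin D_top (U k)" using U(2) k by blast
    moreover have "x0 k \<in> U k" using U(3) k by (rule PiE_mem)
    ultimately show "\<exists>M. \<forall>y. (\<forall>m<M. y m = x0 k m) \<longrightarrow> y \<in> U k" by (rule D_nbhd)
  qed
  from bchoice[OF ex] obtain M where M: "\<forall>k\<in>F. \<forall>y. (\<forall>m<M k. y m = x0 k m) \<longrightarrow> y \<in> U k"
    by blast
  define N where "N = (\<Sum>k\<in>F. M k)"
  have MN: "M k \<le> N" if "k \<in> F" for k
    unfolding N_def using fin that by (simp add: member_le_sum)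
  have "cyl zeta F N x0 \<subseteq> Pi\<^sub>E zeta U"
  proof
    fix x assume x: "x \<in> cyl zeta F N x0"
    then have xe: "x \<in> extensional zeta" and xc: "\<forall>k\<in>F. \<forall>m<N. x k m = x0 k m"
      by (simp_all add: cyl_def topspace_Dpow)
    have "x k \<in> U k" if "k \<in> zeta" for k
    proof (cases "k \<in> F")
      case True
      have "\<forall>m<M k. x k m = x0 k m" using xc True MN[OF True] by simp
      then show ?thesis using M True by blast
    next
      case False then show ?thesis using that by (simp add: F_def)
    qed
    then show "x \<in> Pi\<^sub>E zeta U" using xe by (simp add: PiE_iff)
  qed
  then have "cyl zeta F N x0 \<subseteq> W" using U(4) by (rule order_trans)
  then show ?thesis using fin FZ by blast
qed

definition sh :: "'a list set \<Rightarrow> 'a list set \<Rightarrow> nat \<Rightarrow> ('a list \<Rightarrow> nat \<Rightarrow> bool) \<Rightarrow> ('a list \<Rightarrow> nat \<Rightarrow> bool) \<Rightarrow> ('a list \<Rightarrow> nat \<Rightarrow> bool)"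
  where "sh zeta F N x0 x = restrict (\<lambda>k. if k \<in> F then (\<lambda>m. if m < N then x0 k m else x k (m - N)) else x k) zeta"

definition unsh :: "'a list set \<Rightarrow> 'a list set \<Rightarrow> nat \<Rightarrow> ('a list \<Rightarrow> nat \<Rightarrow> bool) \<Rightarrow> ('a list \<Rightarrow> nat \<Rightarrow> bool)"
  where "unsh zeta F N z = restrict (\<lambda>k. if k \<in> F then (\<lambda>m. z k (m + N)) else z k) zeta"

lemma cont_into_Dpow:
  assumes "\<And>x. x \<in> topspace X \<Longrightarrow> f x \<in> extensional zeta"
    and "\<And>k m. k \<in> zeta \<Longrightarrow> continuous_map X (discrete_topology UNIV) (\<lambda>x. f x k m)"
  shows "continuous_map X (Dpow zeta) f"
  unfolding Dpow_def continuous_map_componentwise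
proof (intro conjI ballI)
  show "f ` topspace X \<subseteq> extensional zeta" using assms(1) by auto
  fix k assume k: "k \<in> zeta"
  show "continuous_map X D_top (\<lambda>x. f x k)"
    unfolding D_top_def continuous_map_componentwise_UNIV using assms(2)[OF k] by simp
qed

lemma sh_cont:
  assumes "F \<subseteq> zeta"
  shows "continuous_map (Dpow zeta) (Dpow zeta) (sh zeta F N x0)"
proof (rule cont_into_Dpow)
  fix x show "sh zeta F N x0 x \<in> extensional zeta" by (simp add: sh_def)
next
  fix k m assume k: "k \<in> zeta"
  show "continuous_map (Dpow zeta) (discrete_topology UNIV) (\<lambda>x. sh zeta F N x0 x k m)"
  proof (cases "k \<in> F \<and> m < N")
    case True
    then show ?thesis using k by (simp add: sh_def)
  next
    case False
    then have "(\<lambda>x. sh zeta F N x0 x k m) = (\<lambda>x. x k (if k \<in> F then m - N else m))"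
      using k by (auto simp: sh_def)
    then show ?thesis using proj_cont[OF k] by simp
  qed
qed

lemma unsh_cont:
  assumes "F \<subseteq> zeta"
  shows "continuous_map (Dpow zeta) (Dpow zeta) (unsh zeta F N)"
proof (rule cont_into_Dpow)
  fix x show "unsh zeta F N x \<in> extensional zeta" by (simp add: unsh_def)
next
  fix k m assume k: "k \<in> zeta"
  have "(\<lambda>x. unsh zeta F N x k m) = (\<lambda>x. x k (if k \<in> F then m + N else m))"
    using k by (auto simp: unsh_def)
  then show "continuous_map (Dpow zeta) (discrete_topology UNIV) (\<lambda>x. unsh zeta F N x k m)"
    using proj_cont[OF k] by simp
qed

lemma sh_homeo:
  assumes "F \<subseteq> zeta"
  shows "homeomorphic_map (Dpow zeta) (subtopology (Dpow zeta) (cyl zeta F N x0)) (sh zeta F N x0)"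
  unfolding homeomorphic_map_maps homeomorphic_maps_def
proof (intro exI[of _ "unsh zeta F N"] conjI ballI)
  have img: "sh zeta F N x0 x \<in> cyl zeta F N x0" for x
    using assms by (auto simp: cyl_def sh_def topspace_Dpow)
  show "continuous_map (Dpow zeta) (subtopology (Dpow zeta) (cyl zeta F N x0)) (sh zeta F N x0)"
    using sh_cont[OF assms] img by (auto intro: continuous_map_into_subtopology)
  show "continuous_map (subtopology (Dpow zeta) (cyl zeta F N x0)) (Dpow zeta) (unsh zeta F N)"
    using unsh_cont[OF assms] by (rule continuous_map_from_subtopology)
  fix x assume "x \<in> topspace (Dpow zeta)"
  then show "unsh zeta F N (sh zeta F N x0 x) = x"
    by (auto simp: topspace_Dpow sh_def unsh_def extensional_def fun_eq_iff)
next
  fix z assume "z \<in> topspace (subtopology (Dpow zeta) (cyl zeta F N x0))"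
  then have z: "z \<in> extensional zeta" "\<forall>k\<in>F. \<forall>m<N. z k m = x0 k m"
    by (auto simp: cyl_def topspace_Dpow)
  show "sh zeta F N x0 (unsh zeta F N z) = z"
  proof (rule ext)
    fix k show "sh zeta F N x0 (unsh zeta F N z) k = z k"
      using z assms by (auto simp: sh_def unsh_def extensional_def fun_eq_iff)
  qed
qed

lemma sh_restrict:
  assumes "xi \<subseteq> zeta"
  shows "restrict (sh zeta F N x0 x) xi = restrict (sh zeta F N x0 y) xi \<longleftrightarrow> restrict x xi = restrict y xi"
proof
  assume h: "restrict (sh zeta F N x0 x) xi = restrict (sh zeta F N x0 y) xi"
  show "restrict x xi = restrict y xi"
  proof (rule ext)
    fix k show "restrict x xi k = restrict y xi k"
    proof (cases "k \<in> xi")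
      case True
      then have e: "sh zeta F N x0 x k = sh zeta F N x0 y k" using h by (metis restrict_apply')
      have "x k m = y k m" for m
      proof (cases "k \<in> F")
        case True
        then show ?thesis using fun_cong[OF e, of "m + N"] assms \<open>k \<in> xi\<close> by (auto simp: sh_def)
      next
        case False
        then show ?thesis using fun_cong[OF e, of m] assms \<open>k \<in> xi\<close> by (auto simp: sh_def)
      qed
      then show ?thesis using True by auto
    qed simp
  qed
next
  assume "restrict x xi = restrict y xi"
  then show "restrict (sh zeta F N x0 x) xi = restrict (sh zeta F N x0 y) xi"
    using assms by (auto simp: sh_def fun_eq_iff restrict_def split: if_splits)
qed


lemma prefix_fin: "finite {s. prefix s (i::'b list)}"
proof -
  have "{s. prefix s i} \<subseteq> set (prefixes i)" by auto
  then show ?thesis by (rule finite_subset) simp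
qed

lemma pre_Xi:
  assumes "zeta \<in> Xi" "i \<in> zeta"
  shows "{s. s \<noteq> [] \<and> prefix s i} \<in> Xi \<and> {s. s \<noteq> [] \<and> prefix s i} \<subseteq> zeta"
proof -
  have fin: "finite {s. s \<noteq> [] \<and> prefix s i}"
    by (rule finite_subset[OF _ prefix_fin[of i]]) blast
  have "{s. s \<noteq> [] \<and> prefix s i} \<subseteq> zeta"
  proof
    fix s assume s: "s \<in> {s. s \<noteq> [] \<and> prefix s i}"
    show "s \<in> zeta"
    proof (cases "s = i")
      case False
      then have "strict_prefix s i" using s by (simp add: strict_prefix_def)
      moreover have "s \<in> T_set" using s by (simp add: T_set_def)
      ultimately show ?thesis using assms unfolding Xi_def by blast
    next
      case True then show ?thesis using assms(2) by simp
    qed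
  qed
  moreover have "{s. s \<noteq> [] \<and> prefix s i} \<in> Xi"
    unfolding Xi_def
  proof (intro CollectI conjI ballI impI)
    show "{s. s \<noteq> [] \<and> prefix s i} \<subseteq> T_set" by (auto simp: T_set_def)
    show "countable {s. s \<noteq> [] \<and> prefix s i}" using fin by (rule countable_finite)
    fix t s assume t: "t \<in> {s. s \<noteq> [] \<and> prefix s i}" and s: "s \<in> T_set" and st: "strict_prefix s t"
    have "prefix s t" using st by (simp add: strict_prefix_def)
    then have "prefix s i" using t by (metis (mono_tags, lifting) mem_Collect_eq prefix_order.trans)
    then show "prefix s i" .
    show "s \<noteq> []" using s by (simp add: T_set_def)
  qed
  ultimately show ?thesis by blast
qed

lemma spre_Xi:
  assumes "zeta \<in> Xi" "i \<in> zeta"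
  shows "{s. s \<noteq> [] \<and> strict_prefix s i} \<in> Xi \<and> {s. s \<noteq> [] \<and> strict_prefix s i} \<subseteq> zeta"
proof -
  have fin: "finite {s. s \<noteq> [] \<and> strict_prefix s i}"
    by (rule finite_subset[OF _ prefix_fin[of i]]) (auto simp: strict_prefix_def)
  have "{s. s \<noteq> [] \<and> strict_prefix s i} \<subseteq> zeta"
  proof
    fix s assume s: "s \<in> {s. s \<noteq> [] \<and> strict_prefix s i}"
    then have "s \<in> T_set" "strict_prefix s i" by (auto simp: T_set_def)
    then show "s \<in> zeta" using assms unfolding Xi_def by blast
  qed
  moreover have "{s. s \<noteq> [] \<and> strict_prefix s i} \<in> Xi"
    unfolding Xi_def
  proof (intro CollectI conjI ballI impI)
    show "{s. s \<noteq> [] \<and> strict_prefix s i} \<subseteq> T_set" by (auto simp: T_set_def)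
    show "countable {s. s \<noteq> [] \<and> strict_prefix s i}" using fin by (rule countable_finite)
    fix t s assume t: "t \<in> {s. s \<noteq> [] \<and> strict_prefix s i}" and s: "s \<in> T_set" and st: "strict_prefix s t"
    have "strict_prefix s i" using t st by (metis (mono_tags, lifting) mem_Collect_eq prefix_order.less_trans)
    then show "strict_prefix s i" .
    show "s \<noteq> []" using s by (simp add: T_set_def)
  qed
  ultimately show ?thesis by blast
qed

lemma exists_sep:
  assumes Z: "zeta \<in> Xi" and i: "i \<in> zeta" and j: "j \<in> zeta" and ij: "\<not> prefix j i"
    and HP: "\<forall>x0\<in>topspace (Dpow zeta). \<forall>x1\<in>topspace (Dpow zeta).
          \<forall>xi\<in>Xi. xi \<subseteq> zeta \<longrightarrow>
            (restrict x0 xi = restrict x1 xi \<longleftrightarrow> restrict (H x0) xi = restrict (H x1) xi)"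
  shows "\<exists>x\<in>topspace (Dpow zeta). H x i \<noteq> H x j"
proof (rule ccontr)
  assume C: "\<not> ?thesis"
  define x :: "'a list \<Rightarrow> nat \<Rightarrow> bool" where "x = restrict (\<lambda>_ _. False) zeta"
  define x' where "x' = x(j := (\<lambda>_. True))"
  have tx: "x \<in> topspace (Dpow zeta)" "x' \<in> topspace (Dpow zeta)"
    using j by (auto simp: topspace_Dpow x_def x'_def extensional_def)
  define A where "A = {s. s \<noteq> [] \<and> prefix s i}"
  define B where "B = {s. s \<noteq> [] \<and> strict_prefix s j}"
  have A: "A \<in> Xi" "A \<subseteq> zeta" using pre_Xi[OF Z i] by (auto simp: A_def)
  have B: "B \<in> Xi" "B \<subseteq> zeta" using spre_Xi[OF Z j] by (auto simp: B_def)
  have jA: "j \<notin> A" using ij by (auto simp: A_def)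
  have jB: "j \<notin> B" by (auto simp: B_def)
  have "restrict x A = restrict x' A" using jA by (auto simp: x'_def restrict_def)
  then have "restrict (H x) A = restrict (H x') A" using HP[rule_format, OF tx A] by blast
  moreover have "i \<in> A" using A i Z by (auto simp: A_def Xi_def T_set_def)
  ultimately have hi: "H x i = H x' i" by (metis restrict_apply')
  have "restrict x B = restrict x' B" using jB by (auto simp: x'_def restrict_def)
  then have hB: "restrict (H x) B = restrict (H x') B" using HP[rule_format, OF tx B] by blast
  have hj: "H x j = H x' j" using hi C tx by metis
  define B' where "B' = {s. s \<noteq> [] \<and> prefix s j}"
  have B': "B' \<in> Xi" "B' \<subseteq> zeta" using pre_Xi[OF Z j] by (auto simp: B'_def)
  have "B' = insert j B" using j Z by (auto simp: B_def B'_def Xi_def T_set_def)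
  have "restrict (H x) B' = restrict (H x') B'"
  proof (rule ext)
    fix s
    show "restrict (H x) B' s = restrict (H x') B' s"
    proof (cases "s \<in> B")
      case True
      then show ?thesis using fun_cong[OF hB, of s] \<open>B' = insert j B\<close> by simp
    next
      case False
      then show ?thesis using hj \<open>B' = insert j B\<close> by auto
    qed
  qed
  then have "restrict x B' = restrict x' B'" using HP[rule_format, OF tx B'] by blast
  moreover have "j \<in> B'" using \<open>B' = insert j B\<close> by auto
  ultimately have "x j = x' j" by (metis restrict_apply')
  then show False using j by (auto simp: x_def x'_def fun_eq_iff)
qed


theorem corollary2p22:
  fixes zeta :: "'a list set" and X :: "('a list \<Rightarrow> nat \<Rightarrow> bool) set"
  assumes "zeta \<in> Xi" and "X \<in> IPS zeta"
    and "i \<in> zeta" and "j \<in> zeta" and "i \<noteq> j"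
  shows "\<exists>Z\<in>IPS zeta. Z \<subseteq> X \<and>
           openin (subtopology (Dpow zeta) X) Z \<and> closedin (subtopology (Dpow zeta) X) Z \<and>
           (\<lambda>z. z i) ` Z \<inter> (\<lambda>z. z j) ` Z = {}"
proof -
  have ips: "X \<subseteq> topspace (Dpow zeta) \<and> (\<exists>H. homeomorphic_map (Dpow zeta) (subtopology (Dpow zeta) X) H \<and> (\<forall>x0\<in>topspace (Dpow zeta). \<forall>x1\<in>topspace (Dpow zeta).
          \<forall>xi\<in>Xi. xi \<subseteq> zeta \<longrightarrow>
            (restrict x0 xi = restrict x1 xi \<longleftrightarrow> restrict (H x0) xi = restrict (H x1) xi)))"
    using assms(2) unfolding IPS_def by (rule CollectD)
  then have XT: "X \<subseteq> topspace (Dpow zeta)" by (rule conjunct1)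
  from conjunct2[OF ips] obtain H where HH: "homeomorphic_map (Dpow zeta) (subtopology (Dpow zeta) X) H \<and> (\<forall>x0\<in>topspace (Dpow zeta). \<forall>x1\<in>topspace (Dpow zeta).
          \<forall>xi\<in>Xi. xi \<subseteq> zeta \<longrightarrow>
            (restrict x0 xi = restrict x1 xi \<longleftrightarrow> restrict (H x0) xi = restrict (H x1) xi))" ..
  then have Hh: "homeomorphic_map (Dpow zeta) (subtopology (Dpow zeta) X) H" by (rule conjunct1)
  from HH have HP: "\<forall>x0\<in>topspace (Dpow zeta). \<forall>x1\<in>topspace (Dpow zeta).
          \<forall>xi\<in>Xi. xi \<subseteq> zeta \<longrightarrow>
            (restrict x0 xi = restrict x1 xi \<longleftrightarrow> restrict (H x0) xi = restrict (H x1) xi)" by (rule conjunct2)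
  have "\<exists>x\<in>topspace (Dpow zeta). H x i \<noteq> H x j"
  proof (cases "prefix j i")
    case False
    show ?thesis by (rule exists_sep[OF assms(1) assms(3) assms(4) False HP])
  next
    case True
    then have "\<not> prefix i j" using assms(5) prefix_order.antisym by blast
    then have "\<exists>x\<in>topspace (Dpow zeta). H x j \<noteq> H x i" by (rule exists_sep[OF assms(1) assms(4) assms(3) _ HP])
    then show ?thesis by auto
  qed
  then obtain x0 where x0: "x0 \<in> topspace (Dpow zeta)" "H x0 i \<noteq> H x0 j" by blast
  have "\<exists>n. H x0 i n \<noteq> H x0 j n" using x0(2) by (auto simp: fun_eq_iff)
  then obtain n where n: "H x0 i n \<noteq> H x0 j n" by blast
  have Hc: "continuous_map (Dpow zeta) (Dpow zeta) H"
    using homeomorphic_imp_continuous_map[OF Hh] continuous_map_in_subtopology by blast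
  have ci: "continuous_map (Dpow zeta) (discrete_topology UNIV) (\<lambda>x. H x i n)"
    using continuous_map_compose[OF Hc proj_cont[OF assms(3)]] by (simp add: o_def)
  have cj: "continuous_map (Dpow zeta) (discrete_topology UNIV) (\<lambda>x. H x j n)"
    using continuous_map_compose[OF Hc proj_cont[OF assms(4)]] by (simp add: o_def)
  define W where "W = {x\<in>topspace (Dpow zeta). H x i n \<in> {H x0 i n}} \<inter> {x\<in>topspace (Dpow zeta). H x j n \<in> {H x0 j n}}"
  have oW: "openin (Dpow zeta) W" unfolding W_def
    by (intro openin_Int openin_continuous_map_preimage[OF ci] openin_continuous_map_preimage[OF cj]) auto
  have "x0 \<in> W" using x0 by (simp add: W_def)
  obtain F N where FN: "finite F" "F \<subseteq> zeta" "cyl zeta F N x0 \<subseteq> W"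
    using Dpow_nbhd[OF oW \<open>x0 \<in> W\<close>] by blast
  define C where "C = cyl zeta F N x0"
  have CT: "C \<subseteq> topspace (Dpow zeta)" by (auto simp: C_def cyl_def)
  have Cc: "openin (Dpow zeta) C" "closedin (Dpow zeta) C" using cyl_clopen[OF FN(1,2)] by (auto simp: C_def)
  define Z where "Z = H ` C"
  have HX: "H ` topspace (Dpow zeta) = X"
    using homeomorphic_imp_surjective_map[OF Hh] XT by auto
  have ZX: "Z \<subseteq> X" using HX CT by (auto simp: Z_def)
  have Zo: "openin (subtopology (Dpow zeta) X) Z"
  proof -
    have "openin (Dpow zeta) C \<longleftrightarrow> C \<subseteq> topspace (Dpow zeta) \<and> openin (subtopology (Dpow zeta) X) (H ` C)"
      by (rule homeomorphic_map_openness_eq[OF Hh])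
    then show ?thesis using Cc(1) unfolding Z_def by blast
  qed
  have Zc: "closedin (subtopology (Dpow zeta) X) Z"
  proof -
    have "closedin (Dpow zeta) C \<longleftrightarrow> C \<subseteq> topspace (Dpow zeta) \<and> closedin (subtopology (Dpow zeta) X) (H ` C)"
      by (rule homeomorphic_map_closedness_eq[OF Hh])
    then show ?thesis using Cc(2) unfolding Z_def by blast
  qed
  have disj: "(\<lambda>z. z i) ` Z \<inter> (\<lambda>z. z j) ` Z = {}"
  proof (rule ccontr)
    assume "\<not> ?thesis"
    then obtain x y where xy: "x \<in> C" "y \<in> C" "H x i = H y j" by (auto simp: Z_def)
    then have "H x i n = H x0 i n" "H y j n = H x0 j n" using FN(3) by (auto simp: C_def W_def)
    then show False using xy(3) n by metis
  qed
  have H2: "homeomorphic_map (subtopology (Dpow zeta) C) (subtopology (subtopology (Dpow zeta) X) Z) H"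
  proof (rule homeomorphic_map_subtopologies[OF Hh])
    have e1: "topspace (Dpow zeta) \<inter> C = C" using CT by blast
    have e2: "topspace (subtopology (Dpow zeta) X) \<inter> Z = Z" using ZX XT by (simp add: Int_absorb1 inf.absorb2 inf_assoc)
    show "H ` (topspace (Dpow zeta) \<inter> C) = topspace (subtopology (Dpow zeta) X) \<inter> Z"
      using e1 e2 by (simp add: Z_def)
  qed
  have XZ: "X \<inter> Z = Z" using ZX by blast
  have H2': "homeomorphic_map (subtopology (Dpow zeta) C) (subtopology (Dpow zeta) Z) H"
    using H2 unfolding subtopology_subtopology XZ .
  have G: "homeomorphic_map (Dpow zeta) (subtopology (Dpow zeta) C) (sh zeta F N x0)"
    using sh_homeo[OF FN(2)] by (simp add: C_def)
  have HG: "homeomorphic_map (Dpow zeta) (subtopology (Dpow zeta) Z) (H \<circ> sh zeta F N x0)"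
    by (rule homeomorphic_map_compose[OF G H2'])
  have shT: "sh zeta F N x0 x \<in> topspace (Dpow zeta)" for x
    by (simp add: sh_def topspace_Dpow)
  have "Z \<in> IPS zeta"
    unfolding IPS_def
  proof (intro CollectI conjI exI[of _ "H \<circ> sh zeta F N x0"] HG ballI impI)
    show "Z \<subseteq> topspace (Dpow zeta)" using ZX XT by blast
    fix a b xi assume ab: "a \<in> topspace (Dpow zeta)" "b \<in> topspace (Dpow zeta)" and xi: "xi \<in> Xi" "xi \<subseteq> zeta"
    have "restrict a xi = restrict b xi \<longleftrightarrow> restrict (sh zeta F N x0 a) xi = restrict (sh zeta F N x0 b) xi"
      using sh_restrict[OF xi(2)] by simp
    also have "\<dots> \<longleftrightarrow> restrict (H (sh zeta F N x0 a)) xi = restrict (H (sh zeta F N x0 b)) xi"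
      by (rule HP[rule_format, OF shT shT xi])
    finally show "restrict a xi = restrict b xi \<longleftrightarrow> restrict ((H \<circ> sh zeta F N x0) a) xi = restrict ((H \<circ> sh zeta F N x0) b) xi"
      by simp
  qed
  then show ?thesis using ZX Zo Zc disj by blast
qed

end
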